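(* Let $K$ be a finite set with $|K|=N$, let $\mathcal S$ be a finite collection of nonempty subsets of $K$, let $\mathbf r=\{r^{(S)}:S\in\mathcal S\}$ be an online rule associated to $\mathcal S$, and let $\lambda>1$. Let $y\in\mathbb R^K$ be arbitrary (no probabilistic assumption) and let $\rho$ be any ordering of $K$. Let $\hat y\in\mathbb R^K$ be the output of the aggregation algorithm $\mathcal A(\mathbf r,\mathcal S,\lambda)$ run on $y$ revealed in the order $\rho$, and let $\hat y^{(S)}\in\mathbb R^S$ be the predictions of expert $S$. Then for every $S\in\mathcal S$, $$\sum_{s\in S}(y_s-\hat y_s)^2\le \sum_{s\in S}\big(y_s-\hat y^{(S)}_s\big)^2+8\lambda^2\log\big(e|\mathcal S|\big)+2\|y_S-\Pi_\lambda y_S\|^2+4\lambda^2\sum_{s\in S}\mathbf 1(|y_s|>\lambda).$$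
   Context: An ordering of $K$ is a bijection $\rho:[N]\to K$; write $\rho[a:b]=\{\rho(a),\dots,\rho(b)\}$ (empty if $b<a$). For $A\subset K$ and $z\in\mathbb R^K$, $z_A\in\mathbb R^A$ is the restriction. An online rule $r^{(S)}$ for a set $S$ is a family of measurable maps $r^{(S)}_{U,s}:\mathbb R^U\to\mathbb R$ indexed by $U\subset S$ and $s\in S\setminus U$; an online rule $\mathbf r$ associated to $\mathcal S$ is a choice of such a rule for every $S\in\mathcal S$. Given an ordering $\rho$ and data $y$, expert $S$ predicts at each $\rho(t)\in S$ the value $\hat y^{(S)}_{\rho(t)}=r^{(S)}_{\rho[1:t-1]\cap S,\,\rho(t)}\big(y_{\rho[1:t-1]\cap S}\big)$; this defines $\hat y^{(S)}\in\mathbb R^S$. Truncation: $T_\lambda(x)=\min\{\max\{x,-\lambda\},\lambda\}$, and for a vector $z\in\mathbb R^A$, $(\Pi_\lambda z)_a=T_\lambda(z_a)$ (the $\ell^2$-projection onto the $\ell^\infty$-ball of radius $\lambda$). Aggregation algorithm $\mathcal A(\mathbf r,\mathcal S,\lambda)$: set $\alpha=1/(8\lambda^2)$ and $w_{S,1}=1/|\mathcal S|$ for all $S\in\mathcal S$. For $t=1,\dots,N$: (1) $\rho(t)$ is revealed; (2) the active set is $A_t=\{S\in\mathcal S:\rho(t)\in S \text{ and } \rho(t')\in S\text{ for some }t'<t\}$ if $t>1$, and $A_1=\{S\in\mathcal S:\rho(1)\in S\}$; (3) predict $\hat y_{\rho(t)}=\sum_{S\in A_t}\hat w_{S,t}\,T_\lambda(\hat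 y^{(S)}_{\rho(t)})$ with $\hat w_{S,t}=w_{S,t}/\sum_{S'\in A_t}w_{S',t}$ (an empty sum is $0$); (4) after $y_{\rho(t)}$ is revealed, set $w_{S,t+1}=w_{S,t}$ for $S\notin A_t$ and, for $S\in A_t$, $w_{S,t+1}=\dfrac{w_{S,t}e^{-\alpha\ell_{S,t}}}{\sum_{S'\in A_t}w_{S',t}e^{-\alpha\ell_{S',t}}}\sum_{S'\in A_t}w_{S',t}$, where $\ell_{S,t}=\big(T_\lambda(y_{\rho(t)})-T_\lambda(\hat y^{(S)}_{\rho(t)})\big)^2$. The output is $\hat y=(\hat y_s)_{s\in K}$. *)

theory Defs
  imports "HOL-Analysis.Analysis"
begin

definition trunc :: "real \<Rightarrow> real \<Rightarrow> real" where
  "trunc lam x = min (max x (- lam)) lam"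

text \<open>An online rule for a family of sets: r S U s z is the value of
  the map r^(S)_{U,s} at z, where z is a data vector on U (an element of the
  extensional function space on U).  An ordering rho of K is a bijection
  from {1..card K} to K.\<close>

definition restr :: "('a \<Rightarrow> real) \<Rightarrow> 'a set \<Rightarrow> ('a \<Rightarrow> real)" where
  "restr y A = restrict y A"

definition expert_at ::
  "('a set \<Rightarrow> 'a set \<Rightarrow> 'a \<Rightarrow> ('a \<Rightarrow> real) \<Rightarrow> real) \<Rightarrow> 'a set \<Rightarrow> (nat \<Rightarrow> 'a)
    \<Rightarrow> ('a \<Rightarrow> real) \<Rightarrow> nat \<Rightarrow> real" where
  "expert_at r S rho y t =
     r S (rho ` {1..<t} \<inter> S) (rho t) (restr y (rho ` {1..<t} \<inter> S))"

definition expert_pred ::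
  "('a set \<Rightarrow> 'a set \<Rightarrow> 'a \<Rightarrow> ('a \<Rightarrow> real) \<Rightarrow> real) \<Rightarrow> 'a set \<Rightarrow> nat \<Rightarrow> (nat \<Rightarrow> 'a)
    \<Rightarrow> ('a \<Rightarrow> real) \<Rightarrow> 'a \<Rightarrow> real" where
  "expert_pred r S N rho y s = expert_at r S rho y (the_inv_into {1..N} rho s)"

definition active :: "'a set set \<Rightarrow> (nat \<Rightarrow> 'a) \<Rightarrow> nat \<Rightarrow> 'a set set" where
  "active SS rho t =
     (if t = 1 then {S \<in> SS. rho 1 \<in> S}
      else {S \<in> SS. rho t \<in> S \<and> (\<exists>t'. 1 \<le> t' \<and> t' < t \<and> rho t' \<in> S)})"

definition loss ::
  "('a set \<Rightarrow> 'a set \<Rightarrow> 'a \<Rightarrow> ('a \<Rightarrow> real) \<Rightarrow> real) \<Rightarrow> real \<Rightarrow> (nat \<Rightarrow> 'a)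
    \<Rightarrow> ('a \<Rightarrow> real) \<Rightarrow> 'a set \<Rightarrow> nat \<Rightarrow> real" where
  "loss r lam rho y S t = (trunc lam (y (rho t)) - trunc lam (expert_at r S rho y t))\<^sup>2"

text \<open>Weights: wts r SS lam rho y n S = w_{S, n+1}.\<close>
primrec wts ::
  "('a set \<Rightarrow> 'a set \<Rightarrow> 'a \<Rightarrow> ('a \<Rightarrow> real) \<Rightarrow> real) \<Rightarrow> 'a set set \<Rightarrow> real \<Rightarrow> (nat \<Rightarrow> 'a)
    \<Rightarrow> ('a \<Rightarrow> real) \<Rightarrow> nat \<Rightarrow> 'a set \<Rightarrow> real" where
  "wts r SS lam rho y 0 S = 1 / real (card SS)"
| "wts r SS lam rho y (Suc n) S =
     (let t = Suc n; A = active SS rho t; w = wts r SS lam rho y n;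
          alpha = 1 / (8 * lam\<^sup>2) in
      if S \<notin> A then w S
      else w S * exp (- alpha * loss r lam rho y S t)
             / (\<Sum>S'\<in>A. w S' * exp (- alpha * loss r lam rho y S' t))
             * (\<Sum>S'\<in>A. w S'))"

definition agg_at ::
  "('a set \<Rightarrow> 'a set \<Rightarrow> 'a \<Rightarrow> ('a \<Rightarrow> real) \<Rightarrow> real) \<Rightarrow> 'a set set \<Rightarrow> real \<Rightarrow> (nat \<Rightarrow> 'a)
    \<Rightarrow> ('a \<Rightarrow> real) \<Rightarrow> nat \<Rightarrow> real" where
  "agg_at r SS lam rho y t =
     (let A = active SS rho t; w = wts r SS lam rho y (t - 1) in
      \<Sum>S\<in>A. (w S / (\<Sum>S'\<in>A. w S')) * trunc lam (expert_at r S rho y t))"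

definition aggregate ::
  "('a set \<Rightarrow> 'a set \<Rightarrow> 'a \<Rightarrow> ('a \<Rightarrow> real) \<Rightarrow> real) \<Rightarrow> 'a set set \<Rightarrow> real \<Rightarrow> nat \<Rightarrow> (nat \<Rightarrow> 'a)
    \<Rightarrow> ('a \<Rightarrow> real) \<Rightarrow> 'a \<Rightarrow> real" where
  "aggregate r SS lam N rho y s = agg_at r SS lam rho y (the_inv_into {1..N} rho s)"

end

theory Submission
  imports Defs
begin

lemma trunc_bound: "0 \<le> lam \<Longrightarrow> \<bar>trunc lam x\<bar> \<le> lam"
  by (auto simp: trunc_def)

lemma trunc_lip: "0 \<le> lam \<Longrightarrow> \<bar>trunc lam a - trunc lam b\<bar> \<le> \<bar>a - b\<bar>"
  by (auto simp: trunc_def)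

lemma trunc_sq_le: "0 \<le> lam \<Longrightarrow> (trunc lam a - trunc lam b)\<^sup>2 \<le> (a - b)\<^sup>2"
  using trunc_lip[of lam a b] by (metis abs_ge_zero power2_abs power_mono)

lemma sq_aux:
  fixes d u l :: real
  assumes "u\<^sup>2 \<le> 4 * l"
  shows "(d + u)\<^sup>2 \<le> u\<^sup>2 + 2 * d\<^sup>2 + 4 * l"
proof -
  have "0 \<le> (d - u)\<^sup>2" by simp
  hence "2 * d * u \<le> d\<^sup>2 + u\<^sup>2" by (simp add: power2_diff)
  thus ?thesis using assms by (simp add: power2_sum)
qed

lemma coord:
  fixes lam yv p e :: real
  assumes "0 < lam" "\<bar>p\<bar> \<le> lam"
  shows "(yv - p)\<^sup>2 \<le> (yv - e)\<^sup>2 + ((trunc lam yv - p)\<^sup>2 - (trunc lam yv - trunc lam e)\<^sup>2)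
          + 2 * (yv - trunc lam yv)\<^sup>2 + 4 * lam\<^sup>2 * of_bool (\<bar>yv\<bar> > lam)"
proof -
  have a: "(trunc lam yv - trunc lam e)\<^sup>2 \<le> (yv - e)\<^sup>2" using trunc_sq_le assms by simp
  have b: "(yv - p)\<^sup>2 \<le> (trunc lam yv - p)\<^sup>2 + 2 * (yv - trunc lam yv)\<^sup>2 + 4 * lam\<^sup>2 * of_bool (\<bar>yv\<bar> > lam)"
  proof (cases "\<bar>yv\<bar> > lam")
    case False
    hence "trunc lam yv = yv" by (auto simp: trunc_def)
    thus ?thesis using False by simp
  next
    case True
    have u: "(trunc lam yv - p)\<^sup>2 \<le> 4 * lam\<^sup>2"
    proof -
      have "\<bar>trunc lam yv - p\<bar> \<le> 2 * lam" using trunc_bound[of lam yv] assms by auto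
      hence "\<bar>trunc lam yv - p\<bar>\<^sup>2 \<le> (2*lam)\<^sup>2" by (rule power_mono) simp
      thus ?thesis by (simp add: power_mult_distrib)
    qed
    have "(yv - p)\<^sup>2 = ((yv - trunc lam yv) + (trunc lam yv - p))\<^sup>2" by simp
    also have "\<dots> \<le> (trunc lam yv - p)\<^sup>2 + 2 * (yv - trunc lam yv)\<^sup>2 + 4 * lam\<^sup>2"
      by (rule sq_aux[OF u])
    finally show ?thesis using True by simp
  qed
  show ?thesis using a b by linarith
qed


lemma expconc_concave:
  fixes c x lam :: real
  assumes "c > 0" "c * (8 * lam\<^sup>2) \<le> 1" "\<bar>x\<bar> \<le> lam"
  shows "concave_on {-lam..lam} (\<lambda>v. exp (- c * (x - v)\<^sup>2))"
proof -
  have "convex_on {-lam..lam} (\<lambda>v. - exp (- c * (x - v)\<^sup>2))"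
  proof (rule f''_ge0_imp_convex)
    show "convex {-lam..lam}" by simp
    show "DERIV (\<lambda>v. - exp (- c * (x - v)\<^sup>2)) v :> (- (2 * c * (x - v)) * exp (- c * (x - v)\<^sup>2))" for v
      by (rule derivative_eq_intros refl | simp add: power2_eq_square algebra_simps)+
    show "DERIV (\<lambda>v. - (2 * c * (x - v)) * exp (- c * (x - v)\<^sup>2)) v :> (2 * c * exp (- c * (x - v)\<^sup>2) * (1 - 2 * c * (x - v)\<^sup>2))" for v
      by (rule derivative_eq_intros refl | simp add: power2_eq_square algebra_simps)+
    fix v assume v: "v \<in> {-lam..lam}"
    have "(x - v)\<^sup>2 \<le> 4 * lam\<^sup>2"
    proof -
      have "\<bar>x - v\<bar> \<le> 2 * lam" using v assms by auto
      hence "\<bar>x - v\<bar>\<^sup>2 \<le> (2*lam)\<^sup>2" by (rule power_mono) simp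
      thus ?thesis by (simp add: power_mult_distrib)
    qed
    hence "2 * c * (x - v)\<^sup>2 \<le> 2 * c * (4 * lam\<^sup>2)" using assms by simp
    also have "\<dots> \<le> 1" using assms by simp
    finally have "0 \<le> 1 - 2 * c * (x - v)\<^sup>2" by simp
    thus "0 \<le> 2 * c * exp (- c * (x - v)\<^sup>2) * (1 - 2 * c * (x - v)\<^sup>2)" using assms by simp
  qed
  thus ?thesis by (simp add: concave_on_def)
qed

lemma expconc:
  fixes q a :: "'b \<Rightarrow> real"
  assumes "finite A" "A \<noteq> {}" "\<forall>i\<in>A. q i \<ge> 0" "sum q A = 1" "\<bar>x\<bar> \<le> lam"
    "\<forall>i\<in>A. \<bar>a i\<bar> \<le> lam" "c > 0" "c * (8 * lam\<^sup>2) \<le> 1"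
  shows "(\<Sum>i\<in>A. q i * exp (- c * (x - a i)\<^sup>2)) \<le> exp (- c * (x - (\<Sum>i\<in>A. q i * a i))\<^sup>2)"
proof -
  have "\<And>i. i \<in> A \<Longrightarrow> a i \<in> {-lam..lam}" using assms(6) by (auto simp: abs_le_iff)
  from concave_on_sum[OF assms(1,2) expconc_concave[OF assms(7,8,5)] assms(4), of a, OF _ this]
  show ?thesis using assms(3) by simp
qed

lemma agg_bound:
  assumes "finite SS" "\<forall>S'\<in>SS. wts r SS lam rho y (t - 1) S' > 0" "0 \<le> lam"
  shows "\<bar>agg_at r SS lam rho y t\<bar> \<le> lam"
proof -
  define A where "A = active SS rho t"
  define w where "w = wts r SS lam rho y (t - 1)"
  have AS: "A \<subseteq> SS" by (auto simp: A_def active_def)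
  have finA: "finite A" using AS assms(1) finite_subset by blast
  have agg: "agg_at r SS lam rho y t = (\<Sum>S\<in>A. (w S / (\<Sum>S'\<in>A. w S')) * trunc lam (expert_at r S rho y t))"
    by (simp add: agg_at_def A_def w_def Let_def)
  show ?thesis
  proof (cases "A = {}")
    case True thus ?thesis using agg assms by simp
  next
    case False
    have wpos: "\<forall>S\<in>A. w S > 0" using AS assms(2) w_def by auto
    have Wpos: "(\<Sum>S'\<in>A. w S') > 0" using sum_pos[OF finA False] wpos by auto
    have "\<bar>agg_at r SS lam rho y t\<bar> \<le> (\<Sum>S\<in>A. \<bar>(w S / (\<Sum>S'\<in>A. w S')) * trunc lam (expert_at r S rho y t)\<bar>)"
      unfolding agg by (rule sum_abs)
    also have "\<dots> \<le> (\<Sum>S\<in>A. (w S / (\<Sum>S'\<in>A. w S')) * lam)"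
    proof (rule sum_mono)
      fix S assume "S \<in> A"
      hence q: "0 \<le> w S / (\<Sum>S'\<in>A. w S')" using wpos Wpos by auto
      have "\<bar>(w S / (\<Sum>S'\<in>A. w S')) * trunc lam (expert_at r S rho y t)\<bar> = (w S / (\<Sum>S'\<in>A. w S')) * \<bar>trunc lam (expert_at r S rho y t)\<bar>"
        using q by (simp only: abs_mult abs_of_nonneg)
      also have "\<dots> \<le> (w S / (\<Sum>S'\<in>A. w S')) * lam"
        by (rule mult_left_mono) (simp_all add: trunc_bound assms(3) q)
      finally show "\<bar>(w S / (\<Sum>S'\<in>A. w S')) * trunc lam (expert_at r S rho y t)\<bar> \<le> (w S / (\<Sum>S'\<in>A. w S')) * lam" .
    qed
    also have "\<dots> = ((\<Sum>S\<in>A. w S) / (\<Sum>S'\<in>A. w S')) * lam"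
      by (simp only: sum_distrib_right sum_divide_distrib)
    also have "\<dots> = lam" using Wpos by simp
    finally show ?thesis .
  qed
qed


lemma wts_props:
  assumes fin: "finite SS" and S: "S \<in> SS" and lam: "lam > 0"
  shows "(\<forall>S'\<in>SS. wts r SS lam rho y n S' > 0) \<and> (\<Sum>S'\<in>SS. wts r SS lam rho y n S') = 1 \<and>
     wts r SS lam rho y n S \<ge> 1 / real (card SS) * exp (1 / (8 * lam\<^sup>2) *
       (\<Sum>t\<in>{t\<in>{1..n}. S \<in> active SS rho t}.
          (trunc lam (y (rho t)) - agg_at r SS lam rho y t)\<^sup>2 - loss r lam rho y S t))"
proof (induction n)
  case 0
  have "card SS > 0" using fin S card_gt_0_iff by blast
  thus ?case by simp
next
  case (Suc n)
  define w where "w = wts r SS lam rho y n"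
  define A where "A = active SS rho (Suc n)"
  define al where "al = 1 / (8 * lam\<^sup>2)"
  define E where "E = (\<lambda>S'. exp (- al * loss r lam rho y S' (Suc n)))"
  define Z where "Z = (\<Sum>S'\<in>A. w S' * E S')"
  define W where "W = (\<Sum>S'\<in>A. w S')"
  define G where "G = (\<lambda>t. (trunc lam (y (rho t)) - agg_at r SS lam rho y t)\<^sup>2 - loss r lam rho y S t)"
  have step: "wts r SS lam rho y (Suc n) S' = (if S' \<notin> A then w S' else w S' * E S' / Z * W)" for S'
    by (simp add: w_def A_def E_def Z_def W_def al_def Let_def)
  have AS: "A \<subseteq> SS" by (auto simp: A_def active_def)
  have finA: "finite A" using AS fin finite_subset by blast
  have pos: "\<forall>S'\<in>SS. w S' > 0" and sum1: "(\<Sum>S'\<in>SS. w S') = 1"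
    and bnd: "w S \<ge> 1 / real (card SS) * exp (al * (\<Sum>t\<in>{t\<in>{1..n}. S \<in> active SS rho t}. G t))"
    using Suc.IH unfolding w_def al_def G_def by auto
  have Epos: "E S' > 0" for S' by (simp add: E_def)
  have ZW: "Z > 0 \<and> W > 0" if "A \<noteq> {}"
  proof -
    have h: "\<forall>S'\<in>A. w S' * E S' > 0" "\<forall>S'\<in>A. w S' > 0" using pos AS Epos by auto
    have "Z > 0" unfolding Z_def by (rule sum_pos[OF finA that]) (use h in auto)
    moreover have "W > 0" unfolding W_def by (rule sum_pos[OF finA that]) (use h in auto)
    ultimately show ?thesis by simp
  qed
  have pos': "\<forall>S'\<in>SS. wts r SS lam rho y (Suc n) S' > 0"
  proof
    fix S' assume "S' \<in> SS"
    show "wts r SS lam rho y (Suc n) S' > 0"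
    proof (cases "S' \<in> A")
      case True
      hence "A \<noteq> {}" by auto
      thus ?thesis using ZW True pos AS Epos step[of S'] by auto
    next
      case False thus ?thesis using step[of S'] pos \<open>S' \<in> SS\<close> by simp
    qed
  qed
  have sumA: "(\<Sum>S'\<in>A. w S' * E S' / Z * W) = W"
  proof (cases "A = {}")
    case True thus ?thesis by (simp add: W_def)
  next
    case False
    have "(\<Sum>S'\<in>A. w S' * E S' / Z * W) = Z / Z * W"
      unfolding Z_def by (simp only: sum_distrib_right sum_divide_distrib)
    thus ?thesis using ZW[OF False] by simp
  qed
  have sum1': "(\<Sum>S'\<in>SS. wts r SS lam rho y (Suc n) S') = 1"
  proof -
    have "(\<Sum>S'\<in>SS. wts r SS lam rho y (Suc n) S') =
        (\<Sum>S'\<in>SS - A. wts r SS lam rho y (Suc n) S') + (\<Sum>S'\<in>A. wts r SS lam rho y (Suc n) S')"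
      using sum.subset_diff[OF AS fin] by blast
    also have "\<dots> = (\<Sum>S'\<in>SS - A. w S') + (\<Sum>S'\<in>A. w S' * E S' / Z * W)"
      using step by simp
    also have "\<dots> = (\<Sum>S'\<in>SS - A. w S') + (\<Sum>S'\<in>A. w S')" using sumA W_def by simp
    also have "\<dots> = (\<Sum>S'\<in>SS. w S')" using sum.subset_diff[OF AS fin, of w] by simp
    finally show ?thesis using sum1 by simp
  qed
  have bnd': "wts r SS lam rho y (Suc n) S \<ge> 1 / real (card SS) * exp (al *
       (\<Sum>t\<in>{t\<in>{1..Suc n}. S \<in> active SS rho t}. G t))"
  proof (cases "S \<in> A")
    case False
    have "{t\<in>{1..Suc n}. S \<in> active SS rho t} = {t\<in>{1..n}. S \<in> active SS rho t}"
      using False unfolding A_def by (auto simp: le_Suc_eq)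
    thus ?thesis using False step[of S] bnd by simp
  next
    case True
    hence Ane: "A \<noteq> {}" by auto
    note ZW = ZW[OF Ane]
    define x where "x = trunc lam (y (rho (Suc n)))"
    define a where "a = (\<lambda>S'. trunc lam (expert_at r S' rho y (Suc n)))"
    define p where "p = agg_at r SS lam rho y (Suc n)"
    have p: "p = (\<Sum>S'\<in>A. (w S' / W) * a S')"
      by (simp add: p_def agg_at_def A_def w_def W_def a_def Let_def)
    have E: "E S' = exp (- al * (x - a S')\<^sup>2)" for S'
      by (simp add: E_def loss_def x_def a_def)
    have jen: "(\<Sum>S'\<in>A. (w S' / W) * exp (- al * (x - a S')\<^sup>2)) \<le> exp (- al * (x - (\<Sum>S'\<in>A. (w S' / W) * a S'))\<^sup>2)"
    proof (rule expconc[OF finA Ane])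
      show "\<forall>i\<in>A. 0 \<le> w i / W" using pos AS ZW by (auto intro!: divide_nonneg_pos less_imp_le)
      show "sum (\<lambda>i. w i / W) A = 1" using ZW by (simp add: W_def sum_divide_distrib[symmetric])
      show "\<bar>x\<bar> \<le> lam" unfolding x_def using trunc_bound lam by simp
      show "\<forall>i\<in>A. \<bar>a i\<bar> \<le> lam" unfolding a_def using trunc_bound lam by simp
      show "al > 0" using lam by (simp add: al_def)
      show "al * (8 * lam\<^sup>2) \<le> 1" using lam by (simp add: al_def)
    qed
    have "(\<Sum>S'\<in>A. (w S' / W) * exp (- al * (x - a S')\<^sup>2)) = Z / W"
      unfolding Z_def E by (simp add: sum_divide_distrib)
    hence ZleW: "Z / W \<le> exp (- al * (x - p)\<^sup>2)" using jen p by simp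
    have WZ: "exp (al * (x - p)\<^sup>2) \<le> W / Z"
    proof -
      have "Z \<le> W * exp (- al * (x - p)\<^sup>2)" using ZleW ZW by (simp add: divide_le_eq mult.commute)
      hence "exp (al * (x - p)\<^sup>2) * Z \<le> W * (exp (al * (x - p)\<^sup>2) * exp (- al * (x - p)\<^sup>2))"
        by (simp add: mult_left_mono algebra_simps)
      also have "exp (al * (x - p)\<^sup>2) * exp (- al * (x - p)\<^sup>2) = 1" by (simp add: exp_add[symmetric])
      finally show ?thesis using ZW by (simp add: le_divide_eq)
    qed
    have set: "{t\<in>{1..Suc n}. S \<in> active SS rho t} = insert (Suc n) {t\<in>{1..n}. S \<in> active SS rho t}"
      using True unfolding A_def by (auto simp: le_Suc_eq)
    have sumG: "(\<Sum>t\<in>{t\<in>{1..Suc n}. S \<in> active SS rho t}. G t) = G (Suc n) + (\<Sum>t\<in>{t\<in>{1..n}. S \<in> active SS rho t}. G t)"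
      unfolding set by (subst sum.insert) auto
    have GS: "G (Suc n) = (x - p)\<^sup>2 - loss r lam rho y S (Suc n)"
      by (simp add: G_def x_def p_def)
    define X where "X = (\<Sum>t\<in>{t\<in>{1..n}. S \<in> active SS rho t}. G t)"
    have "1 / real (card SS) * exp (al * (\<Sum>t\<in>{t\<in>{1..Suc n}. S \<in> active SS rho t}. G t))
        = (1 / real (card SS) * exp (al * X)) * E S * exp (al * (x - p)\<^sup>2)"
      unfolding sumG GS X_def E_def by (simp add: exp_add[symmetric] algebra_simps)
    also have "\<dots> \<le> w S * E S * (W / Z)"
      using bnd WZ Epos pos S unfolding X_def
      by (intro mult_mono) (auto intro: mult_nonneg_nonneg less_imp_le)
    also have "\<dots> = wts r SS lam rho y (Suc n) S" using step[of S] True by simp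
    finally show ?thesis .
  qed
  show ?case using pos' sum1' bnd' unfolding al_def G_def by blast
qed


theorem mainTheorem1:
  fixes K :: "'a set" and SS :: "'a set set"
    and r :: "'a set \<Rightarrow> 'a set \<Rightarrow> 'a \<Rightarrow> ('a \<Rightarrow> real) \<Rightarrow> real"
    and lam :: real and y :: "'a \<Rightarrow> real" and rho :: "nat \<Rightarrow> 'a"
  assumes "finite K"
    and "finite SS"
    and "\<forall>S\<in>SS. S \<noteq> {} \<and> S \<subseteq> K"
    and "\<forall>S\<in>SS. \<forall>U. U \<subseteq> S \<longrightarrow> (\<forall>s\<in>S - U.
            r S U s \<in> borel_measurable (PiM U (\<lambda>_. borel)))"
    and "lam > 1"
    and "bij_betw rho {1..card K} K"
    and "S \<in> SS"
  shows "(\<Sum>s\<in>S. (y s - aggregate r SS lam (card K) rho y s)\<^sup>2)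
         \<le> (\<Sum>s\<in>S. (y s - expert_pred r S (card K) rho y s)\<^sup>2)
            + 8 * lam\<^sup>2 * ln (exp 1 * real (card SS))
            + 2 * (\<Sum>s\<in>S. (y s - trunc lam (y s))\<^sup>2)
            + 4 * lam\<^sup>2 * (\<Sum>s\<in>S. of_bool (\<bar>y s\<bar> > lam))"
proof -
  define N where "N = card K"
  have lam0: "lam > 0" using assms(5) by simp
  have fin: "finite SS" using assms(2) .
  have S: "S \<in> SS" using assms(7) .
  have SK: "S \<subseteq> K" using assms(3,7) by auto
  have bij: "bij_betw rho {1..N} K" using assms(6) unfolding N_def .
  have inj: "inj_on rho {1..N}" using bij by (rule bij_betw_imp_inj_on)
  define T where "T = {t\<in>{1..N}. rho t \<in> S}"
  have TN: "T \<subseteq> {1..N}" unfolding T_def by auto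
  have img: "rho ` T = S"
  proof
    show "rho ` T \<subseteq> S" unfolding T_def by auto
    show "S \<subseteq> rho ` T"
    proof
      fix s assume "s \<in> S"
      hence "s \<in> rho ` {1..N}" using SK bij_betw_imp_surj_on[OF bij] by blast
      then obtain t where "t \<in> {1..N}" "s = rho t" by blast
      thus "s \<in> rho ` T" using \<open>s \<in> S\<close> unfolding T_def by blast
    qed
  qed
  have bijT: "bij_betw rho T S" using bij_betw_subset[OF bij TN img] .
  have reidx: "(\<Sum>s\<in>S. f s) = (\<Sum>t\<in>T. f (rho t))" for f :: "'a \<Rightarrow> real"
    using sum.reindex_bij_betw[OF bijT, of f] by simp
  have inv: "the_inv_into {1..N} rho (rho t) = t" if "t \<in> T" for t
  proof -
    have "t \<in> {1..N}" using that TN by blast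
    from the_inv_into_f_f[OF inj this] show ?thesis .
  qed
  define al where "al = 1 / (8 * lam\<^sup>2)"
  define p where "p = (\<lambda>t. agg_at r SS lam rho y t)"
  define e where "e = (\<lambda>t. expert_at r S rho y t)"
  define G where "G = (\<lambda>t. (trunc lam (y (rho t)) - p t)\<^sup>2 - loss r lam rho y S t)"
  have pb: "\<bar>p t\<bar> \<le> lam" for t
    unfolding p_def by (rule agg_bound[OF fin]) (use wts_props[OF fin S lam0] lam0 in auto)
  have lhs: "(\<Sum>s\<in>S. (y s - aggregate r SS lam (card K) rho y s)\<^sup>2) = (\<Sum>t\<in>T. (y (rho t) - p t)\<^sup>2)"
    unfolding reidx by (rule sum.cong[OF refl]) (simp only: aggregate_def N_def[symmetric] inv p_def)
  have ex: "(\<Sum>s\<in>S. (y s - expert_pred r S (card K) rho y s)\<^sup>2) = (\<Sum>t\<in>T. (y (rho t) - e t)\<^sup>2)"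
    unfolding reidx by (rule sum.cong[OF refl]) (simp only: expert_pred_def N_def[symmetric] inv e_def)
  have coordsum: "(\<Sum>t\<in>T. (y (rho t) - p t)\<^sup>2) \<le> (\<Sum>t\<in>T. (y (rho t) - e t)\<^sup>2 + G t
      + 2 * (y (rho t) - trunc lam (y (rho t)))\<^sup>2 + 4 * lam\<^sup>2 * of_bool (\<bar>y (rho t)\<bar> > lam))"
    by (rule sum_mono) (use coord[OF lam0 pb] in \<open>simp add: G_def loss_def e_def\<close>)
  have split: "(\<Sum>t\<in>T. (y (rho t) - e t)\<^sup>2 + G t
      + 2 * (y (rho t) - trunc lam (y (rho t)))\<^sup>2 + 4 * lam\<^sup>2 * of_bool (\<bar>y (rho t)\<bar> > lam))
     = (\<Sum>t\<in>T. (y (rho t) - e t)\<^sup>2) + (\<Sum>t\<in>T. G t)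
      + 2 * (\<Sum>t\<in>T. (y (rho t) - trunc lam (y (rho t)))\<^sup>2) + 4 * lam\<^sup>2 * (\<Sum>t\<in>T. of_bool (\<bar>y (rho t)\<bar> > lam))"
    by (simp add: sum.distrib sum_distrib_left)
  define T1 where "T1 = {t\<in>{1..N}. S \<in> active SS rho t}"
  have T1T: "T1 \<subseteq> T" unfolding T1_def T_def active_def by (auto split: if_splits)
  have finT: "finite T" using TN finite_subset by blast
  have cardpos: "card SS > 0" using fin S card_gt_0_iff by blast
  have G1: "(\<Sum>t\<in>T1. G t) \<le> 8 * lam\<^sup>2 * ln (real (card SS))"
  proof -
    note wp = wts_props[OF fin S lam0, of r rho y N]
    have w1: "wts r SS lam rho y N S \<le> 1"
    proof -
      have "wts r SS lam rho y N S \<le> (\<Sum>S'\<in>SS. wts r SS lam rho y N S')"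
        by (rule member_le_sum[OF S _ fin]) (use wp in \<open>auto intro: less_imp_le\<close>)
      thus ?thesis using wp by simp
    qed
    have "1 / real (card SS) * exp (al * (\<Sum>t\<in>T1. G t)) \<le> 1"
      using wp w1 unfolding al_def T1_def G_def p_def by linarith
    hence "exp (al * (\<Sum>t\<in>T1. G t)) \<le> real (card SS)" using cardpos by (simp add: field_simps)
    hence "al * (\<Sum>t\<in>T1. G t) \<le> ln (real (card SS))" using cardpos
      by (metis exp_le_cancel_iff exp_ln of_nat_0_less_iff)
    hence "(8 * lam\<^sup>2) * (al * (\<Sum>t\<in>T1. G t)) \<le> (8 * lam\<^sup>2) * ln (real (card SS))"
      by (rule mult_left_mono) simp
    thus ?thesis using lam0 by (simp add: al_def)
  qed
  have G2: "(\<Sum>t\<in>T - T1. G t) \<le> 8 * lam\<^sup>2"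
  proof -
    have Gb: "G t \<le> 4 * lam\<^sup>2" for t
    proof -
      have "\<bar>trunc lam (y (rho t)) - p t\<bar> \<le> 2 * lam"
        using abs_triangle_ineq4[of "trunc lam (y (rho t))" "p t"] trunc_bound[OF less_imp_le[OF lam0], of "y (rho t)"] pb[of t]
        by linarith
      hence "\<bar>trunc lam (y (rho t)) - p t\<bar>\<^sup>2 \<le> (2*lam)\<^sup>2" by (rule power_mono) simp
      moreover have "loss r lam rho y S t \<ge> 0" by (simp add: loss_def)
      ultimately show ?thesis by (simp add: G_def power_mult_distrib)
    qed
    have sub: "\<forall>a\<in>T - T1. \<forall>b\<in>T - T1. a = b"
    proof (intro ballI, rule ccontr)
      fix a b assume a: "a \<in> T - T1" and b: "b \<in> T - T1" and ne: "a \<noteq> b"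
      have first: "\<not> (\<exists>t'. 1 \<le> t' \<and> t' < t \<and> rho t' \<in> S)" if "t \<in> T - T1" for t
      proof -
        have t: "t \<in> {1..N}" "rho t \<in> S" "S \<notin> active SS rho t" using that unfolding T_def T1_def by auto
        have "t \<noteq> 1" using t S unfolding active_def by auto
        thus ?thesis using t S unfolding active_def by auto
      qed
      show False
      proof (cases "a < b")
        case True thus False using first[OF b] a unfolding T_def by auto
      next
        case False hence "b < a" using ne by simp
        thus False using first[OF a] b unfolding T_def by auto
      qed
    qed
    have c1: "card (T - T1) \<le> 1" using card_le_Suc0_iff_eq[of "T - T1"] sub finT by auto
    have "(\<Sum>t\<in>T - T1. G t) \<le> of_nat (card (T - T1)) * (4 * lam\<^sup>2)"
      by (rule sum_bounded_above) (rule Gb)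
    also have "\<dots> \<le> 1 * (4 * lam\<^sup>2)" using c1 by (intro mult_right_mono) auto
    finally have "(\<Sum>t\<in>T - T1. G t) \<le> 4 * lam\<^sup>2" by simp
    thus ?thesis using zero_le_power2[of lam] by linarith
  qed
  have Gsum: "(\<Sum>t\<in>T. G t) \<le> 8 * lam\<^sup>2 * ln (exp 1 * real (card SS))"
  proof -
    have "(\<Sum>t\<in>T. G t) = (\<Sum>t\<in>T - T1. G t) + (\<Sum>t\<in>T1. G t)"
      using sum.subset_diff[OF T1T finT, of G] by simp
    also have "\<dots> \<le> 8 * lam\<^sup>2 + 8 * lam\<^sup>2 * ln (real (card SS))" using G1 G2 by simp
    also have "\<dots> = 8 * lam\<^sup>2 * ln (exp 1 * real (card SS))"
      using cardpos by (simp add: ln_mult algebra_simps)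
    finally show ?thesis .
  qed
  show ?thesis
    unfolding lhs ex reidx[of "\<lambda>s. (y s - trunc lam (y s))\<^sup>2"] reidx[of "\<lambda>s. of_bool (\<bar>y s\<bar> > lam)"]
    using coordsum split Gsum by linarith
qed

end
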